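(* Fix integers $n\ge 2$, $m\ge 1$ and prompts $x_1,\dots,x_n$ (deterministic). For each $i$, let $y_i^1,\dots,y_i^m$ be i.i.d. responses drawn from a distribution $\pi(\cdot\mid x_i)$, independently across $i$, and let $r_i^j=r(x_i,y_i^j)$ be real rewards with finite variance. Let $\mu_i=\mathbb{E}[r(x_i,y)]$ and $\sigma_i^2=\mathrm{Var}[r(x_i,y)]$ for $y\sim\pi(\cdot\mid x_i)$. Define $\hat\mu_i=\frac1m\sum_{j=1}^m r_i^j$, $\hat{\bar\mu}=\frac1{nm}\sum_{i=1}^n\sum_{j=1}^m r_i^j$, and for $\lambda\in[0,1]$ the baseline $b_i^j(\lambda)=(1-\lambda)\hat\mu_i+\lambda\hat{\bar\mu}$. Let $$v=\frac1{nm}\sum_{i=1}^n\sigma_i^2,\qquad \bar\mu=\frac1n\sum_{i=1}^n\mu_i,\qquad s=\frac1{n-1}\sum_{i=1}^n(\mu_i-\bar\mu)^2,$$ and assume $s+v>0$. Then the function $$\lambda\mapsto \frac1{mn}\sum_{i=1}^n\sum_{j=1}^m\mathbb{E}\big[(b_i^j(\lambda)-\mu_i)^2\big]$$ (expectation over the responses) is minimized over $\lambda\in[0,1]$ at $\lambda^\star=\dfrac{v}{s+v}$. *)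

theory Defs
  imports "HOL-Probability.Probability"
begin

text \<open>Prompts are indexed by i < n (0-based), responses by j < m.
  x i is the i-th prompt, P p the response distribution given prompt p,
  rw p y the reward r(p,y), Y i j the j-th response to prompt i.\<close>

definition mu :: "('p \<Rightarrow> 'b measure) \<Rightarrow> ('p \<Rightarrow> 'b \<Rightarrow> real) \<Rightarrow> (nat \<Rightarrow> 'p) \<Rightarrow> nat \<Rightarrow> real" where
  "mu P rw x i = (\<integral>y. rw (x i) y \<partial>(P (x i)))"

definition sigma2 :: "('p \<Rightarrow> 'b measure) \<Rightarrow> ('p \<Rightarrow> 'b \<Rightarrow> real) \<Rightarrow> (nat \<Rightarrow> 'p) \<Rightarrow> nat \<Rightarrow> real" where
  "sigma2 P rw x i = (\<integral>y. (rw (x i) y - mu P rw x i)\<^sup>2 \<partial>(P (x i)))"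

definition vbar :: "('p \<Rightarrow> 'b measure) \<Rightarrow> ('p \<Rightarrow> 'b \<Rightarrow> real) \<Rightarrow> (nat \<Rightarrow> 'p) \<Rightarrow> nat \<Rightarrow> nat \<Rightarrow> real" where
  "vbar P rw x n m = (\<Sum>i<n. sigma2 P rw x i) / (real n * real m)"

definition mubar :: "('p \<Rightarrow> 'b measure) \<Rightarrow> ('p \<Rightarrow> 'b \<Rightarrow> real) \<Rightarrow> (nat \<Rightarrow> 'p) \<Rightarrow> nat \<Rightarrow> real" where
  "mubar P rw x n = (\<Sum>i<n. mu P rw x i) / real n"

definition sbar :: "('p \<Rightarrow> 'b measure) \<Rightarrow> ('p \<Rightarrow> 'b \<Rightarrow> real) \<Rightarrow> (nat \<Rightarrow> 'p) \<Rightarrow> nat \<Rightarrow> real" where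
  "sbar P rw x n = (\<Sum>i<n. (mu P rw x i - mubar P rw x n)\<^sup>2) / (real n - 1)"

definition rwd :: "('p \<Rightarrow> 'b \<Rightarrow> real) \<Rightarrow> (nat \<Rightarrow> 'p) \<Rightarrow> (nat \<Rightarrow> nat \<Rightarrow> 'a \<Rightarrow> 'b) \<Rightarrow> nat \<Rightarrow> nat \<Rightarrow> 'a \<Rightarrow> real" where
  "rwd rw x Y i j \<omega> = rw (x i) (Y i j \<omega>)"

definition muhat :: "('p \<Rightarrow> 'b \<Rightarrow> real) \<Rightarrow> (nat \<Rightarrow> 'p) \<Rightarrow> (nat \<Rightarrow> nat \<Rightarrow> 'a \<Rightarrow> 'b) \<Rightarrow> nat \<Rightarrow> nat \<Rightarrow> 'a \<Rightarrow> real" where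
  "muhat rw x Y m i \<omega> = (\<Sum>j<m. rwd rw x Y i j \<omega>) / real m"

definition mubarhat :: "('p \<Rightarrow> 'b \<Rightarrow> real) \<Rightarrow> (nat \<Rightarrow> 'p) \<Rightarrow> (nat \<Rightarrow> nat \<Rightarrow> 'a \<Rightarrow> 'b) \<Rightarrow> nat \<Rightarrow> nat \<Rightarrow> 'a \<Rightarrow> real" where
  "mubarhat rw x Y n m \<omega> = (\<Sum>i<n. \<Sum>j<m. rwd rw x Y i j \<omega>) / (real n * real m)"

definition baseline :: "('p \<Rightarrow> 'b \<Rightarrow> real) \<Rightarrow> (nat \<Rightarrow> 'p) \<Rightarrow> (nat \<Rightarrow> nat \<Rightarrow> 'a \<Rightarrow> 'b) \<Rightarrow> nat \<Rightarrow> nat \<Rightarrow> real \<Rightarrow> nat \<Rightarrow> nat \<Rightarrow> 'a \<Rightarrow> real" where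
  "baseline rw x Y n m lam i j \<omega> = (1 - lam) * muhat rw x Y m i \<omega> + lam * mubarhat rw x Y n m \<omega>"

definition mse :: "'a measure \<Rightarrow> ('p \<Rightarrow> 'b measure) \<Rightarrow> ('p \<Rightarrow> 'b \<Rightarrow> real) \<Rightarrow> (nat \<Rightarrow> 'p) \<Rightarrow> (nat \<Rightarrow> nat \<Rightarrow> 'a \<Rightarrow> 'b) \<Rightarrow> nat \<Rightarrow> nat \<Rightarrow> real \<Rightarrow> real" where
  "mse M P rw x Y n m lam =
     (\<Sum>i<n. \<Sum>j<m. \<integral>\<omega>. (baseline rw x Y n m lam i j \<omega> - mu P rw x i)\<^sup>2 \<partial>M) / (real m * real n)"

end

theory Submission
  imports Defs
begin

lemma L2_lincomb:
  fixes Z :: "'i \<Rightarrow> 'a \<Rightarrow> real"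
  assumes "prob_space M" "finite I"
    and int1: "\<And>a. a\<in>I \<Longrightarrow> integrable M (Z a)"
    and int2: "\<And>a b. a\<in>I \<Longrightarrow> b\<in>I \<Longrightarrow> integrable M (\<lambda>\<omega>. Z a \<omega> * Z b \<omega>)"
    and mean0: "\<And>a. a\<in>I \<Longrightarrow> (\<integral>\<omega>. Z a \<omega> \<partial>M) = 0"
    and orth: "\<And>a b. a\<in>I \<Longrightarrow> b\<in>I \<Longrightarrow> a\<noteq>b \<Longrightarrow> (\<integral>\<omega>. Z a \<omega> * Z b \<omega> \<partial>M) = 0"
  shows "(\<integral>\<omega>. ((\<Sum>a\<in>I. c a * Z a \<omega>) + d)\<^sup>2 \<partial>M) = (\<Sum>a\<in>I. (c a)\<^sup>2 * (\<integral>\<omega>. Z a \<omega> * Z a \<omega> \<partial>M)) + d\<^sup>2"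
proof -
  interpret prob_space M by fact
  have eq: "((\<Sum>a\<in>I. c a * Z a \<omega>) + d)\<^sup>2 =
     (\<Sum>a\<in>I. \<Sum>b\<in>I. c a * c b * (Z a \<omega> * Z b \<omega>)) + (\<Sum>a\<in>I. (2 * d * c a) * Z a \<omega>) + d\<^sup>2" for \<omega>
    by (simp add: power2_eq_square algebra_simps sum_distrib_left sum_distrib_right sum.distrib)
  have "(\<integral>\<omega>. ((\<Sum>a\<in>I. c a * Z a \<omega>) + d)\<^sup>2 \<partial>M) =
     (\<Sum>a\<in>I. \<Sum>b\<in>I. c a * c b * (\<integral>\<omega>. Z a \<omega> * Z b \<omega> \<partial>M)) + (\<Sum>a\<in>I. (2 * d * c a) * (\<integral>\<omega>. Z a \<omega> \<partial>M)) + d\<^sup>2"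
  proof -
    have i1: "integrable M (\<lambda>\<omega>. \<Sum>a\<in>I. \<Sum>b\<in>I. c a * c b * (Z a \<omega> * Z b \<omega>))"
      by (auto intro!: integrable_sum integrable_mult_right int2)
    have i2: "integrable M (\<lambda>\<omega>. \<Sum>a\<in>I. (2 * d * c a) * Z a \<omega>)"
      by (auto intro!: integrable_sum integrable_mult_right int1)
    have "(\<integral>\<omega>. ((\<Sum>a\<in>I. c a * Z a \<omega>) + d)\<^sup>2 \<partial>M) =
      (\<integral>\<omega>. (\<Sum>a\<in>I. \<Sum>b\<in>I. c a * c b * (Z a \<omega> * Z b \<omega>)) + (\<Sum>a\<in>I. (2 * d * c a) * Z a \<omega>) + d\<^sup>2 \<partial>M)"
      unfolding eq ..
    also have "\<dots> = (\<integral>\<omega>. (\<Sum>a\<in>I. \<Sum>b\<in>I. c a * c b * (Z a \<omega> * Z b \<omega>)) \<partial>M) + (\<integral>\<omega>. (\<Sum>a\<in>I. (2 * d * c a) * Z a \<omega>) \<partial>M) + d\<^sup>2"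
      using i1 i2 by (simp add: prob_space)
    also have "(\<integral>\<omega>. (\<Sum>a\<in>I. \<Sum>b\<in>I. c a * c b * (Z a \<omega> * Z b \<omega>)) \<partial>M) = (\<Sum>a\<in>I. \<Sum>b\<in>I. c a * c b * (\<integral>\<omega>. Z a \<omega> * Z b \<omega> \<partial>M))"
    proof -
      have "(\<integral>\<omega>. (\<Sum>a\<in>I. \<Sum>b\<in>I. c a * c b * (Z a \<omega> * Z b \<omega>)) \<partial>M) = (\<Sum>a\<in>I. (\<integral>\<omega>. (\<Sum>b\<in>I. c a * c b * (Z a \<omega> * Z b \<omega>)) \<partial>M))"
        by (rule Bochner_Integration.integral_sum) (auto intro!: integrable_sum integrable_mult_right int2)
      also have "\<dots> = (\<Sum>a\<in>I. \<Sum>b\<in>I. c a * c b * (\<integral>\<omega>. Z a \<omega> * Z b \<omega> \<partial>M))"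
        by (intro sum.cong refl, subst Bochner_Integration.integral_sum) (auto intro!: integrable_sum integrable_mult_right int2)
      finally show ?thesis .
    qed
    also have "(\<integral>\<omega>. (\<Sum>a\<in>I. (2 * d * c a) * Z a \<omega>) \<partial>M) = (\<Sum>a\<in>I. (2 * d * c a) * (\<integral>\<omega>. Z a \<omega> \<partial>M))"
      by (subst Bochner_Integration.integral_sum, auto intro!: integrable_sum integrable_mult_right int1)
    finally show ?thesis .
  qed
  also have "\<dots> = (\<Sum>a\<in>I. (c a)\<^sup>2 * (\<integral>\<omega>. Z a \<omega> * Z a \<omega> \<partial>M)) + d\<^sup>2"
  proof -
    have "(\<Sum>b\<in>I. c a * c b * (\<integral>\<omega>. Z a \<omega> * Z b \<omega> \<partial>M)) = (c a)\<^sup>2 * (\<integral>\<omega>. Z a \<omega> * Z a \<omega> \<partial>M)"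
      if "a \<in> I" for a
    proof -
      have "(\<Sum>b\<in>I. c a * c b * (\<integral>\<omega>. Z a \<omega> * Z b \<omega> \<partial>M)) =
            (\<Sum>b\<in>I. if b = a then c a * c b * (\<integral>\<omega>. Z a \<omega> * Z b \<omega> \<partial>M) else 0)"
        using orth[OF that] by (intro sum.cong) auto
      also have "\<dots> = (c a)\<^sup>2 * (\<integral>\<omega>. Z a \<omega> * Z a \<omega> \<partial>M)"
        using that assms(2) by (simp add: power2_eq_square)
      finally show ?thesis .
    qed
    then show ?thesis using mean0 by simp
  qed
  finally show ?thesis .
qed


lemma quad_min:
  fixes n s v l :: real
  assumes "n \<ge> 2" "s + v > 0"
  shows "(1 - v/(s+v))\<^sup>2 * n * v + (2*(v/(s+v)) - (v/(s+v))\<^sup>2) * v + (v/(s+v))\<^sup>2 * (n-1) * s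
       \<le> (1 - l)\<^sup>2 * n * v + (2*l - l\<^sup>2) * v + l\<^sup>2 * (n-1) * s"
proof -
  define t where "t = v/(s+v)"
  have st: "(s+v)*t = v" using assms unfolding t_def by simp
  have key: "(1 - y)\<^sup>2 * n * v + (2*y - y\<^sup>2) * v + y\<^sup>2 * (n-1) * s = n * v - (n - 1) * v * t + (n-1)*(s+v)*(y-t)\<^sup>2" for y
  proof -
    have "(1 - y)\<^sup>2 * n * v + (2*y - y\<^sup>2) * v + y\<^sup>2 * (n-1) * s - (n * v - (n - 1) * v * t + (n-1)*(s+v)*(y-t)\<^sup>2)
        = (n-1)*(2*y - t)*((s+v)*t - v)"
      by (simp add: algebra_simps power2_eq_square)
    then show ?thesis using st by simp
  qed
  have "0 \<le> (n-1)*(s+v)*(l-t)\<^sup>2" using assms by simp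
  then show ?thesis unfolding t_def[symmetric] key by simp
qed

theorem proposition2:
  fixes M :: "'a measure" and N :: "'b measure" and P :: "'p \<Rightarrow> 'b measure"
    and rw :: "'p \<Rightarrow> 'b \<Rightarrow> real" and x :: "nat \<Rightarrow> 'p"
    and Y :: "nat \<Rightarrow> nat \<Rightarrow> 'a \<Rightarrow> 'b" and n m :: nat
  assumes "prob_space M"
    and "n \<ge> 2" and "m \<ge> 1"
    and "\<And>i. i < n \<Longrightarrow> prob_space (P (x i))"
    and "prob_space.indep_vars M (\<lambda>_. N) (\<lambda>(i, j). Y i j) ({..<n} \<times> {..<m})"
    and "\<And>i j. i < n \<Longrightarrow> j < m \<Longrightarrow> distr M N (Y i j) = P (x i)"
    and "\<And>i. i < n \<Longrightarrow> rw (x i) \<in> borel_measurable N"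
    and "\<And>i. i < n \<Longrightarrow> integrable (P (x i)) (\<lambda>y. (rw (x i) y)\<^sup>2)"
    and "sbar P rw x n + vbar P rw x n m > 0"
  shows "vbar P rw x n m / (sbar P rw x n + vbar P rw x n m) \<in> {0..1}
    \<and> (\<forall>lam\<in>{0..1}.
         mse M P rw x Y n m (vbar P rw x n m / (sbar P rw x n + vbar P rw x n m))
           \<le> mse M P rw x Y n m lam)"
proof -
  interpret prob_space M by (rule assms(1))
  define I where "I = {..<n} \<times> {..<m}"
  define mu' where "mu' = mu P rw x"
  define Z where "Z = (\<lambda>(i,j) \<omega>. rw (x i) (Y i j \<omega>) - mu' i)"
  have fin: "finite I" by (simp add: I_def)
  have n0: "real n > 0" "real n \<ge> 2" using assms(2) by auto
  have m0: "real m > 0" using assms(3) by auto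
  have indY: "indep_vars (\<lambda>_. N) (\<lambda>(i, j). Y i j) I" using assms(5) I_def by simp
  have Ymeas: "Y i j \<in> measurable M N" if "i<n" "j<m" for i j
  proof -
    have "\<forall>a\<in>I. random_variable N ((\<lambda>(i,j). Y i j) a)" using indY by (simp add: indep_vars_def)
    then show ?thesis using that by (force simp: I_def)
  qed
  have setsP: "sets (P (x i)) = sets N" if "i<n" for i
    using assms(6)[of i 0] assms(3) that by (metis less_le_trans zero_less_one sets_distr)
  have rwP: "rw (x i) \<in> borel_measurable (P (x i))" if "i<n" for i
    using assms(7)[OF that] measurable_cong_sets[OF setsP[OF that] refl] by blast
  have Pfacts: "integrable (P (x i)) (rw (x i)) \<and> integrable (P (x i)) (\<lambda>y. rw (x i) y - mu' i)
      \<and> (\<integral>y. rw (x i) y - mu' i \<partial>P (x i)) = 0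
      \<and> integrable (P (x i)) (\<lambda>y. (rw (x i) y - mu' i) * (rw (x i) y - mu' i))
      \<and> (\<integral>y. (rw (x i) y - mu' i) * (rw (x i) y - mu' i) \<partial>P (x i)) = sigma2 P rw x i" if "i<n" for i
  proof -
    interpret Pi: prob_space "P (x i)" by (rule assms(4)[OF that])
    have i1: "integrable (P (x i)) (rw (x i))"
      by (rule Pi.square_integrable_imp_integrable[OF rwP[OF that] assms(8)[OF that]])
    have i2: "integrable (P (x i)) (\<lambda>y. rw (x i) y - mu' i)" using i1 by simp
    have e2: "(\<integral>y. rw (x i) y - mu' i \<partial>P (x i)) = 0"
      using i1 by (simp add: Pi.prob_space mu'_def mu_def)
    have eqf: "(\<lambda>y. (rw (x i) y - mu' i) * (rw (x i) y - mu' i)) = (\<lambda>y. (rw (x i) y)\<^sup>2 + ((- 2 * mu' i) * rw (x i) y + mu' i * mu' i))"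
      by (auto simp: fun_eq_iff power2_eq_square algebra_simps)
    have i3: "integrable (P (x i)) (\<lambda>y. (rw (x i) y - mu' i) * (rw (x i) y - mu' i))"
      unfolding eqf using i1 assms(8)[OF that] by simp
    have e3: "(\<integral>y. (rw (x i) y - mu' i) * (rw (x i) y - mu' i) \<partial>P (x i)) = sigma2 P rw x i"
      by (simp add: sigma2_def mu'_def power2_eq_square)
    show ?thesis using i1 i2 e2 i3 e3 by blast
  qed
  have transfer: "integrable M (\<lambda>\<omega>. g (Y i j \<omega>)) \<longleftrightarrow> integrable (P (x i)) g"
     "(\<integral>\<omega>. g (Y i j \<omega>) \<partial>M) = (\<integral>y. g y \<partial>P (x i))"
    if "i<n" "j<m" "g \<in> borel_measurable N" for i j and g :: "'b \<Rightarrow> real"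
    using integrable_distr_eq[OF Ymeas[OF that(1,2)] that(3)] integral_distr[OF Ymeas[OF that(1,2)] that(3)]
      assms(6)[OF that(1,2)] by auto
  have Zfacts: "integrable M (Z a) \<and> (\<integral>\<omega>. Z a \<omega> \<partial>M) = 0 \<and>
     integrable M (\<lambda>\<omega>. Z a \<omega> * Z a \<omega>) \<and> (\<integral>\<omega>. Z a \<omega> * Z a \<omega> \<partial>M) = sigma2 P rw x (fst a)"
    if "a \<in> I" for a
  proof -
    obtain i j where a: "a = (i,j)" "i<n" "j<m" by (cases a) (use \<open>a \<in> I\<close> in \<open>auto simp: I_def\<close>)
    have m1: "(\<lambda>y. rw (x i) y - mu' i) \<in> borel_measurable N" using assms(7)[OF a(2)] by measurable
    have m2: "(\<lambda>y. (rw (x i) y - mu' i) * (rw (x i) y - mu' i)) \<in> borel_measurable N" using assms(7)[OF a(2)] by measurable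
    have z1: "Z a = (\<lambda>\<omega>. (\<lambda>y. rw (x i) y - mu' i) (Y i j \<omega>))" by (simp add: Z_def a)
    have z2: "(\<lambda>\<omega>. Z a \<omega> * Z a \<omega>) = (\<lambda>\<omega>. (\<lambda>y. (rw (x i) y - mu' i) * (rw (x i) y - mu' i)) (Y i j \<omega>))"
      by (simp add: Z_def a)
    show ?thesis
      unfolding z1 z2 transfer[OF a(2,3) m1] transfer[OF a(2,3) m2] using Pfacts[OF a(2)] a(1) by simp
  qed
  have indZ: "indep_vars (\<lambda>_. borel) Z I"
  proof -
    have "indep_vars (\<lambda>_. borel) (\<lambda>a \<omega>. (\<lambda>(i,j) y. rw (x i) y - mu' i) a ((\<lambda>(i, j). Y i j) a \<omega>)) I"
    proof (rule indep_vars_compose2[OF indY])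
      fix a assume "a \<in> I"
      then obtain i j where a: "a = (i,j)" "i<n" by (cases a) (use \<open>a \<in> I\<close> in \<open>auto simp: I_def\<close>)
      show "(\<lambda>(i,j) y. rw (x i) y - mu' i) a \<in> measurable N borel"
        using assms(7)[OF a(2)] a(1) by simp
    qed
    moreover have "(\<lambda>a \<omega>. (\<lambda>(i,j) y. rw (x i) y - mu' i) a ((\<lambda>(i, j). Y i j) a \<omega>)) = Z"
      by (auto simp: Z_def fun_eq_iff)
    ultimately show ?thesis by simp
  qed
  have orth: "integrable M (\<lambda>\<omega>. Z a \<omega> * Z b \<omega>) \<and> (\<integral>\<omega>. Z a \<omega> * Z b \<omega> \<partial>M) = 0"
    if "a \<in> I" "b \<in> I" "a \<noteq> b" for a b
  proof -
    have ind2: "indep_vars (\<lambda>_. borel) Z {a,b}" using indZ that by (auto intro: indep_vars_subset)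
    have ints: "\<And>c. c \<in> {a,b} \<Longrightarrow> integrable M (Z c)" using Zfacts that by auto
    have p: "(\<lambda>\<omega>. \<Prod>c\<in>{a,b}. Z c \<omega>) = (\<lambda>\<omega>. Z a \<omega> * Z b \<omega>)" using that(3) by auto
    show ?thesis
      using indep_vars_lebesgue_integral[OF _ ind2 ints] indep_vars_integrable[OF _ ind2 ints]
        Zfacts[OF that(1)] Zfacts[OF that(2)] that(3) unfolding p by simp
  qed
  have int2: "integrable M (\<lambda>\<omega>. Z a \<omega> * Z b \<omega>)" if "a \<in> I" "b \<in> I" for a b
    using orth[OF that] Zfacts[OF that(1)] by (cases "a = b") auto
  define c where "c = (\<lambda>lam i (a::nat\<times>nat). (1-lam)*(if fst a = i then 1/real m else 0) + lam/(real n*real m))"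
  define mb where "mb = mubar P rw x n"
  have mb_eq: "mb = (\<Sum>i<n. mu' i) / real n" by (simp add: mb_def mubar_def mu'_def)
  have decomp: "baseline rw x Y n m lam i j \<omega> - mu P rw x i = (\<Sum>a\<in>I. c lam i a * Z a \<omega>) + lam * (mb - mu' i)"
    if "i<n" for lam i j \<omega>
  proof -
    have rz: "rwd rw x Y k l \<omega> = Z (k,l) \<omega> + mu' k" for k l by (simp add: rwd_def Z_def)
    have mh: "muhat rw x Y m i \<omega> = mu' i + (\<Sum>l<m. Z (i,l) \<omega>) / real m"
      using m0 by (simp add: muhat_def rz sum.distrib field_simps)
    have SI: "(\<Sum>a\<in>I. f a) = (\<Sum>k<n. \<Sum>l<m. f (k,l))" for f :: "nat\<times>nat \<Rightarrow> real"
      by (simp add: I_def sum.cartesian_product)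
    have mbh: "mubarhat rw x Y n m \<omega> = mb + (\<Sum>a\<in>I. Z a \<omega>) / (real n * real m)"
    proof -
      have "(\<Sum>k<n. \<Sum>l<m. rwd rw x Y k l \<omega>) = (\<Sum>a\<in>I. Z a \<omega>) + real m * (\<Sum>k<n. mu' k)"
        by (simp add: rz sum.distrib SI sum_distrib_left)
      then show ?thesis using m0 n0 unfolding mubarhat_def mb_eq by (simp add: field_simps)
    qed
    have s1: "(\<Sum>a\<in>I. (if fst a = i then 1/real m else 0) * Z a \<omega>) = (\<Sum>l<m. Z (i,l) \<omega>) / real m"
    proof -
      have "(\<Sum>a\<in>I. (if fst a = i then 1/real m else 0) * Z a \<omega>) = (\<Sum>k<n. if k = i then (\<Sum>l<m. Z (k,l) \<omega>) / real m else 0)"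
        unfolding SI by (intro sum.cong refl) (auto simp: sum_divide_distrib)
      also have "\<dots> = (\<Sum>l<m. Z (i,l) \<omega>) / real m" using that by simp
      finally show ?thesis .
    qed
    have s2: "(\<Sum>a\<in>I. c lam i a * Z a \<omega>) = (1-lam) * ((\<Sum>l<m. Z (i,l) \<omega>) / real m) + lam / (real n * real m) * (\<Sum>a\<in>I. Z a \<omega>)"
    proof -
      have "c lam i a * Z a \<omega> = (1-lam) * ((if fst a = i then 1/real m else 0) * Z a \<omega>) + lam / (real n * real m) * Z a \<omega>" for a
        by (simp add: c_def algebra_simps)
      then have "(\<Sum>a\<in>I. c lam i a * Z a \<omega>) = (\<Sum>a\<in>I. (1-lam) * ((if fst a = i then 1/real m else 0) * Z a \<omega>) + lam / (real n * real m) * Z a \<omega>)"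
        by simp
      also have "\<dots> = (1-lam) * (\<Sum>a\<in>I. (if fst a = i then 1/real m else 0) * Z a \<omega>) + lam / (real n * real m) * (\<Sum>a\<in>I. Z a \<omega>)"
        by (simp only: sum.distrib sum_distrib_left)
      finally show ?thesis unfolding s1 .
    qed
    show ?thesis unfolding baseline_def mh mbh s2 mu'_def[symmetric] by (simp add: algebra_simps)
  qed
  define S where "S = (\<Sum>k<n. sigma2 P rw x k)"
  define Q where "Q = (\<Sum>i<n. (mb - mu' i)\<^sup>2)"
  define v where "v = vbar P rw x n m"
  define sb where "sb = sbar P rw x n"
  have v_eq: "v = S / (real n * real m)" by (simp add: v_def vbar_def S_def)
  have s_eq: "sb = Q / (real n - 1)"
    by (simp add: sb_def sbar_def Q_def mb_def mu'_def power2_commute)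
  have Eij: "(\<integral>\<omega>. (baseline rw x Y n m lam i j \<omega> - mu P rw x i)\<^sup>2 \<partial>M)
     = (\<Sum>a\<in>I. (c lam i a)\<^sup>2 * sigma2 P rw x (fst a)) + (lam * (mb - mu' i))\<^sup>2" if "i < n" for lam i j
  proof -
    have "(\<integral>\<omega>. (baseline rw x Y n m lam i j \<omega> - mu P rw x i)\<^sup>2 \<partial>M)
      = (\<integral>\<omega>. ((\<Sum>a\<in>I. c lam i a * Z a \<omega>) + lam * (mb - mu' i))\<^sup>2 \<partial>M)"
      using decomp[OF that] by simp
    also have "\<dots> = (\<Sum>a\<in>I. (c lam i a)\<^sup>2 * (\<integral>\<omega>. Z a \<omega> * Z a \<omega> \<partial>M)) + (lam * (mb - mu' i))\<^sup>2"
      by (rule L2_lincomb[OF assms(1) fin]) (use Zfacts int2 orth in auto)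
    also have "\<dots> = (\<Sum>a\<in>I. (c lam i a)\<^sup>2 * sigma2 P rw x (fst a)) + (lam * (mb - mu' i))\<^sup>2"
      using Zfacts by (intro arg_cong2[where f="(+)"] sum.cong refl) auto
    finally show ?thesis .
  qed
  have inner: "(\<Sum>a\<in>I. (c lam i a)\<^sup>2 * sigma2 P rw x (fst a))
     = real m * ((((1-lam)/real m)\<^sup>2 + 2*((1-lam)/real m)*(lam/(real n*real m))) * sigma2 P rw x i + (lam/(real n*real m))\<^sup>2 * S)"
    if "i < n" for lam i
  proof -
    define X where "X = ((1-lam)/real m)\<^sup>2 + 2*((1-lam)/real m)*(lam/(real n*real m))"
    define B where "B = lam/(real n*real m)"
    have cc: "(c lam i (k,l))\<^sup>2 * sigma2 P rw x k = (if k = i then X * sigma2 P rw x k else 0) + B\<^sup>2 * sigma2 P rw x k" for k l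
      using m0 n0 by (cases "k = i") (simp_all add: c_def X_def B_def power2_eq_square field_simps)
    have "(\<Sum>a\<in>I. (c lam i a)\<^sup>2 * sigma2 P rw x (fst a)) = (\<Sum>k<n. \<Sum>l<m. (c lam i (k,l))\<^sup>2 * sigma2 P rw x k)"
      by (simp add: I_def sum.cartesian_product split_beta)
    also have "\<dots> = (\<Sum>k<n. real m * ((if k = i then X * sigma2 P rw x k else 0) + B\<^sup>2 * sigma2 P rw x k))"
      unfolding cc by simp
    also have "\<dots> = real m * ((\<Sum>k<n. (if k = i then X * sigma2 P rw x k else 0)) + B\<^sup>2 * S)"
      by (simp add: sum_distrib_left[symmetric] sum.distrib S_def)
    also have "\<dots> = real m * (X * sigma2 P rw x i + B\<^sup>2 * S)"
      using that by simp
    finally show ?thesis unfolding X_def B_def .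
  qed
  have mse_eq: "mse M P rw x Y n m lam = ((1 - lam)\<^sup>2 * n * v + (2*lam - lam\<^sup>2) * v + lam\<^sup>2 * (n-1) * sb) / n" for lam
  proof -
    define X where "X = ((1-lam)/real m)\<^sup>2 + 2*((1-lam)/real m)*(lam/(real n*real m))"
    define B where "B = lam/(real n*real m)"
    have "(\<Sum>i<n. \<Sum>j<m. \<integral>\<omega>. (baseline rw x Y n m lam i j \<omega> - mu P rw x i)\<^sup>2 \<partial>M)
       = (\<Sum>i<n. real m * (real m * (X * sigma2 P rw x i + B\<^sup>2 * S) + lam\<^sup>2 * (mb - mu' i)\<^sup>2))"
      by (intro sum.cong refl) (simp add: Eij inner X_def B_def power_mult_distrib)
    also have "\<dots> = real m * (real m * (X * S + real n * B\<^sup>2 * S) + lam\<^sup>2 * Q)"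
      by (simp add: sum.distrib sum_distrib_left[symmetric] S_def Q_def algebra_simps)
    finally have T: "(\<Sum>i<n. \<Sum>j<m. \<integral>\<omega>. (baseline rw x Y n m lam i j \<omega> - mu P rw x i)\<^sup>2 \<partial>M)
       = real m * (real m * (X * S + real n * B\<^sup>2 * S) + lam\<^sup>2 * Q)" .
    have S_eq: "S = v * (real n * real m)" using v_eq n0 m0 by simp
    have Q_eq: "Q = sb * (real n - 1)" using s_eq n0 by simp
    show ?thesis unfolding mse_def T S_eq Q_eq X_def B_def using n0 m0
      by (simp add: field_simps power2_eq_square)
  qed
  have v0: "v \<ge> 0" unfolding v_eq S_def
    by (intro divide_nonneg_nonneg sum_nonneg) (auto simp: sigma2_def)
  have s0: "sb \<ge> 0" unfolding s_eq Q_def using n0 by (intro divide_nonneg_nonneg sum_nonneg) auto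
  have pos: "sb + v > 0" using assms(9) by (simp add: sb_def v_def)
  have r1: "v / (sb + v) \<in> {0..1}" using v0 s0 pos by auto
  have r2: "mse M P rw x Y n m (v / (sb + v)) \<le> mse M P rw x Y n m lam" for lam
    unfolding mse_eq using quad_min[OF n0(2) pos, of lam] n0 by (simp add: divide_right_mono)
  show ?thesis using r1 r2 unfolding v_def sb_def by blast
qed

end
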